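(* Let $n>2$. Then the following statement is false: "for every $A\in\mathrm{Hull}(\Lambda_2(3,n))$ we have $\operatorname{Per}(A)\ge(n!/n^n)^{2}$, with equality if and only if $A=n^{-2}J_n^3$." That is, there exists $A\in\mathrm{Hull}(\Lambda_2(3,n))$ such that either $\operatorname{Per}(A)<(n!/n^n)^2$, or $\operatorname{Per}(A)=(n!/n^n)^2$ and $A\neq n^{-2}J_n^3$.
   Context: Let $I_n=\{1,\dots,n\}$. A $3$-dimensional matrix of order $n$ is a function $I_n^3\to\mathbb R$. A $2$-plane is the set of positions with one coordinate fixed. $\Lambda_2(3,n)$ is the set of $(0,1)$-valued $3$-dimensional matrices of order $n$ with exactly one $1$ in each $2$-plane. $\mathrm{Hull}(X)$ denotes the convex hull of $X$. A diagonal is a selection of $n$ positions any two of which differ in every coordinate; $\operatorname{Per}(A)$ is the sum over diagonals of the product of the entries on the diagonal. $J_n^3$ is the $3$-dimensional matrix of order $n$ with all entries $1$. *)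

theory Defs
  imports "HOL-Analysis.Analysis"
begin

text \<open>A 3-dimensional matrix of order n = CARD('n) is an element of real^'n^'n^'n,
  entry at position (i,j,k) is A$i$j$k.  The index set I_n is the finite type 'n.\<close>

type_synonym ('n) mat3 = "real ^ 'n ^ 'n ^ 'n"

definition entry3 :: "'n::finite mat3 \<Rightarrow> 'n \<times> 'n \<times> 'n \<Rightarrow> real" where
  "entry3 A p = (case p of (i, j, k) \<Rightarrow> A $ i $ j $ k)"

definition Lambda2 :: "'n::finite mat3 set" where
  "Lambda2 = {A. (\<forall>i j k. A $ i $ j $ k = 0 \<or> A $ i $ j $ k = 1)
     \<and> (\<forall>i. \<exists>!p. A $ i $ fst p $ snd p = 1)
     \<and> (\<forall>j. \<exists>!p. A $ fst p $ j $ snd p = 1)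
     \<and> (\<forall>k. \<exists>!p. A $ fst p $ snd p $ k = 1)}"

definition diagonals3 :: "('n::finite \<times> 'n \<times> 'n) set set" where
  "diagonals3 = {D. card D = CARD('n) \<and>
     (\<forall>p\<in>D. \<forall>q\<in>D. p \<noteq> q \<longrightarrow>
        fst p \<noteq> fst q \<and> fst (snd p) \<noteq> fst (snd q) \<and> snd (snd p) \<noteq> snd (snd q))}"

definition per3 :: "'n::finite mat3 \<Rightarrow> real" where
  "per3 A = (\<Sum>D\<in>diagonals3. \<Prod>p\<in>D. entry3 A p)"

definition J3 :: "'n::finite mat3" where
  "J3 = (\<chi> i j k. 1)"

end

theory Submission
  imports Defs "HOL-Combinatorics.Permutations"
begin

lemma tp_perm: "\<sigma> permutes UNIV \<Longrightarrow> (\<lambda>x. Transposition.transpose a b (\<sigma> x)) permutes UNIV"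
  using permutes_compose[of \<sigma> UNIV "Transposition.transpose a b"] permutes_swap_id[of a UNIV b]
  by (simp add: o_def)

lemma perm_count:
  fixes i j :: "'n::finite"
  shows "real (card {\<sigma>::'n\<Rightarrow>'n. \<sigma> permutes UNIV \<and> \<sigma> i = j}) = fact CARD('n) / CARD('n)"
proof -
  define F where "F j = {\<sigma>::'n\<Rightarrow>'n. \<sigma> permutes UNIV \<and> \<sigma> i = j}" for j
  have eq: "card (F j) = card (F i)" for j
  proof -
    have "bij_betw (\<lambda>\<sigma>. Transposition.transpose i j \<circ> \<sigma>) (F i) (F j)"
      by (rule bij_betw_byWitness[where f'="\<lambda>\<sigma>. Transposition.transpose i j \<circ> \<sigma>"])
         (auto simp: F_def o_def tp_perm)
    then show ?thesis by (simp add: bij_betw_same_card)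
  qed
  have U: "{\<sigma>::'n\<Rightarrow>'n. \<sigma> permutes UNIV} = (\<Union>j. F j)" by (auto simp: F_def)
  have "fact CARD('n) = card (\<Union>j. F j)"
    using card_permutations[of "UNIV::'n set" "CARD('n)"] U by simp
  also have "\<dots> = (\<Sum>j\<in>UNIV. card (F j))"
    by (rule card_UN_disjoint) (auto simp: F_def)
  also have "\<dots> = (\<Sum>j\<in>(UNIV::'n set). card (F i))" by (intro sum.cong refl eq)
  also have "\<dots> = CARD('n) * card (F i)" by simp
  finally have "fact CARD('n) = real (CARD('n) * card (F i))" by (metis of_nat_fact)
  then show ?thesis using eq[of j] by (simp add: F_def field_simps)
qed

lemma inj_permutes: "inj (\<sigma>::'n::finite \<Rightarrow> 'n) \<Longrightarrow> \<sigma> permutes UNIV"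
  by (rule bij_imp_permutes) (auto simp: bij_def finite_UNIV_inj_surj)

definition diag :: "('n \<Rightarrow> 'n) \<Rightarrow> ('n \<Rightarrow> 'n) \<Rightarrow> ('n \<times> 'n \<times> 'n) set" where
  "diag \<sigma> \<tau> = range (\<lambda>i. (i, \<sigma> i, \<tau> i))"

lemma diag_in:
  fixes \<sigma> \<tau> :: "'n::finite \<Rightarrow> 'n"
  assumes "\<sigma> permutes UNIV" "\<tau> permutes UNIV"
  shows "diag \<sigma> \<tau> \<in> diagonals3"
proof -
  have i1: "inj \<sigma>" "inj \<tau>" using assms permutes_inj by auto
  have "card (diag \<sigma> \<tau>) = CARD('n)" unfolding diag_def
    by (rule card_image) (auto simp: inj_on_def)
  moreover have "\<forall>p\<in>diag \<sigma> \<tau>. \<forall>q\<in>diag \<sigma> \<tau>. p \<noteq> q \<longrightarrow>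
        fst p \<noteq> fst q \<and> fst (snd p) \<noteq> fst (snd q) \<and> snd (snd p) \<noteq> snd (snd q)"
    using i1 by (auto simp: diag_def inj_eq)
  ultimately show ?thesis unfolding diagonals3_def by blast
qed

lemma diag_surj:
  fixes D :: "('n::finite \<times> 'n \<times> 'n) set"
  assumes "D \<in> diagonals3"
  shows "\<exists>\<sigma> \<tau>. \<sigma> permutes UNIV \<and> \<tau> permutes UNIV \<and> D = diag \<sigma> \<tau>"
proof -
  have cD: "card D = CARD('n)" and dist: "\<And>p q. p \<in> D \<Longrightarrow> q \<in> D \<Longrightarrow> p \<noteq> q \<Longrightarrow>
        fst p \<noteq> fst q \<and> fst (snd p) \<noteq> fst (snd q) \<and> snd (snd p) \<noteq> snd (snd q)"
    using assms unfolding diagonals3_def by blast+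
  have inj: "inj_on fst D" using dist by (meson inj_onI)
  have "card (fst ` D) = CARD('n)" using card_image[OF inj] cD by simp
  then have fD: "fst ` D = UNIV" by (simp add: card_eq_UNIV_imp_eq_UNIV)
  define g where "g = the_inv_into D fst"
  have gD: "g i \<in> D" for i using the_inv_into_into[OF inj, of i D] fD by (simp add: g_def)
  have fg: "fst (g i) = i" for i using f_the_inv_into_f[OF inj, of i] fD by (simp add: g_def)
  have gf: "z \<in> D \<Longrightarrow> g (fst z) = z" for z using the_inv_into_f_f[OF inj] by (simp add: g_def)
  define \<sigma> where "\<sigma> i = fst (snd (g i))" for i
  define \<tau> where "\<tau> i = snd (snd (g i))" for i
  have "inj \<sigma>"
  proof (rule injI)
    fix x y assume "\<sigma> x = \<sigma> y"
    then show "x = y" using dist[OF gD gD, of x y] fg[of x] fg[of y] by (metis \<sigma>_def)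
  qed
  moreover have "inj \<tau>"
  proof (rule injI)
    fix x y assume "\<tau> x = \<tau> y"
    then show "x = y" using dist[OF gD gD, of x y] fg[of x] fg[of y] by (metis \<tau>_def)
  qed
  moreover have "D = diag \<sigma> \<tau>"
  proof
    show "D \<subseteq> diag \<sigma> \<tau>"
    proof
      fix z assume z: "z \<in> D"
      have "z = (fst z, \<sigma> (fst z), \<tau> (fst z))" using gf[OF z] by (simp add: \<sigma>_def \<tau>_def)
      then show "z \<in> diag \<sigma> \<tau>" unfolding diag_def by blast
    qed
    show "diag \<sigma> \<tau> \<subseteq> D"
    proof
      fix z assume "z \<in> diag \<sigma> \<tau>"
      then obtain i where "z = (i, \<sigma> i, \<tau> i)" unfolding diag_def by blast
      then have "z = g i" using fg[of i] by (simp add: \<sigma>_def \<tau>_def prod_eq_iff)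
      then show "z \<in> D" using gD by simp
    qed
  qed
  ultimately show ?thesis using inj_permutes by blast
qed

lemma diag_inj:
  assumes "diag \<sigma> \<tau> = diag \<sigma>' \<tau>'"
  shows "\<sigma> = \<sigma>' \<and> \<tau> = \<tau>'"
proof -
  have "\<sigma> i = \<sigma>' i \<and> \<tau> i = \<tau>' i" for i
  proof -
    have "(i, \<sigma> i, \<tau> i) \<in> diag \<sigma>' \<tau>'" using assms unfolding diag_def by blast
    then show ?thesis unfolding diag_def by auto
  qed
  then show ?thesis by auto
qed

lemma card_diagonals3:
  "real (card (diagonals3 :: ('n::finite \<times> 'n \<times> 'n) set set)) = (fact CARD('n))^2"
proof -
  let ?P = "{\<sigma>::'n\<Rightarrow>'n. \<sigma> permutes UNIV}"
  have "bij_betw (\<lambda>(\<sigma>,\<tau>). diag \<sigma> \<tau>) (?P \<times> ?P) diagonals3"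
    unfolding bij_betw_def
  proof
    show "inj_on (\<lambda>(\<sigma>,\<tau>). diag \<sigma> \<tau>) (?P \<times> ?P)"
      by (auto simp: inj_on_def dest: diag_inj)
    show "(\<lambda>(\<sigma>,\<tau>). diag \<sigma> \<tau>) ` (?P \<times> ?P) = diagonals3"
      using diag_in diag_surj by fastforce
  qed
  then have "card (diagonals3 :: ('n \<times> 'n \<times> 'n) set set) = card (?P \<times> ?P)"
    by (simp add: bij_betw_same_card)
  also have "\<dots> = fact CARD('n) * fact CARD('n)"
    using card_permutations[of "UNIV::'n set" "CARD('n)"] by (simp add: card_cartesian_product)
  finally show ?thesis by (simp add: power2_eq_square)
qed

lemma diag_fst_UNIV:
  fixes D :: "('n::finite \<times> 'n \<times> 'n) set"
  assumes "D \<in> diagonals3"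
  shows "fst ` D = UNIV" and "inj_on fst D"
proof -
  have cD: "card D = CARD('n)" and dist: "\<And>p q. p \<in> D \<Longrightarrow> q \<in> D \<Longrightarrow> p \<noteq> q \<Longrightarrow>
        fst p \<noteq> fst q \<and> fst (snd p) \<noteq> fst (snd q) \<and> snd (snd p) \<noteq> snd (snd q)"
    using assms unfolding diagonals3_def by blast+
  show inj: "inj_on fst D" using dist by (meson inj_onI)
  have "card (fst ` D) = CARD('n)" using card_image[OF inj] cD by simp
  then show "fst ` D = UNIV" by (simp add: card_eq_UNIV_imp_eq_UNIV)
qed

definition xv :: "'n \<Rightarrow> 'n \<Rightarrow> 'n \<Rightarrow> real" where
  "xv p q i = (if i = p then 1 else if i = q then -1 else 0)"

lemma xv_neg: "p \<noteq> q \<Longrightarrow> j \<noteq> j' \<Longrightarrow> xv p q j * xv p q j' \<le> 0"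
  by (auto simp: xv_def)

lemma key_ineq:
  fixes D :: "('n::finite \<times> 'n \<times> 'n) set" and c t :: real
  assumes D: "D \<in> diagonals3" and pq: "p \<noteq> q" and c: "c > 0"
  defines "f \<equiv> \<lambda>z. xv p q (fst z) * xv p q (fst (snd z)) * xv p q (snd (snd z))"
  shows "(\<Prod>z\<in>D. c + t * f z) + (\<Prod>z\<in>D. c - t * f z) \<le> 2 * c ^ CARD('n)"
    and "t \<noteq> 0 \<Longrightarrow> (p,p,p) \<in> D \<Longrightarrow> (q,q,q) \<in> D \<Longrightarrow>
         (\<Prod>z\<in>D. c + t * f z) + (\<Prod>z\<in>D. c - t * f z) < 2 * c ^ CARD('n)"
proof -
  have cD: "card D = CARD('n)" and dist: "\<And>p q. p \<in> D \<Longrightarrow> q \<in> D \<Longrightarrow> p \<noteq> q \<Longrightarrow>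
        fst p \<noteq> fst q \<and> fst (snd p) \<noteq> fst (snd q) \<and> snd (snd p) \<noteq> snd (snd q)"
    using D unfolding diagonals3_def by blast+
  have fin: "finite D" by simp
  obtain zp where zp: "zp \<in> D" "fst zp = p" using diag_fst_UNIV(1)[OF D] by (metis UNIV_I imageE)
  obtain zq where zq: "zq \<in> D" "fst zq = q" using diag_fst_UNIV(1)[OF D] by (metis UNIV_I imageE)
  have ne: "zp \<noteq> zq" using zp zq pq by auto
  define R where "R = D - {zp, zq}"
  have DR: "D = insert zp (insert zq R)" using zp zq by (auto simp: R_def)
  have Rn: "zp \<notin> insert zq R" "zq \<notin> R" using ne by (auto simp: R_def)
  have fR: "f z = 0" if "z \<in> R" for z
  proof -
    have "fst z \<noteq> p" using dist[OF zp(1), of z] that zp by (auto simp: R_def)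
    moreover have "fst z \<noteq> q" using dist[OF zq(1), of z] that zq by (auto simp: R_def)
    ultimately show ?thesis by (simp add: f_def xv_def)
  qed
  have cR: "card R = CARD('n) - 2" using cD zp zq ne by (simp add: R_def card_Diff_subset)
  have n2: "CARD('n) \<ge> 2"
  proof -
    have "card {zp, zq} \<le> card D" using zp zq by (intro card_mono) auto
    then show ?thesis using ne cD by simp
  qed
  have prodR: "(\<Prod>z\<in>R. c + u * f z) = c ^ (CARD('n) - 2)" for u
    using fR cR by simp
  define a where "a = f zp"
  define b where "b = f zq"
  have split: "(\<Prod>z\<in>D. c + u * f z) = (c + u * a) * (c + u * b) * c ^ (CARD('n) - 2)" for u
    unfolding DR using Rn prodR[of u] by (simp add: a_def b_def)
  have split2: "(\<Prod>z\<in>D. c - t * f z) = (c - t * a) * (c - t * b) * c ^ (CARD('n) - 2)"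
    using split[of "-t"] by simp
  have ab: "a * b \<le> 0"
  proof -
    obtain j k where zp': "zp = (p, j, k)" using zp by (cases zp) auto
    obtain j' k' where zq': "zq = (q, j', k')" using zq by (cases zq) auto
    have jj: "j \<noteq> j'" "k \<noteq> k'" using dist[OF zp(1) zq(1) ne] zp' zq' by auto
    have "a * b = (xv p q p * xv p q q) * ((xv p q j * xv p q j') * (xv p q k * xv p q k'))"
      by (simp add: a_def b_def f_def zp' zq' algebra_simps)
    moreover have "xv p q p * xv p q q = -1" using pq by (simp add: xv_def)
    moreover have "(xv p q j * xv p q j') * (xv p q k * xv p q k') \<ge> 0"
      using xv_neg[OF pq jj(1)] xv_neg[OF pq jj(2)] by (simp add: mult_nonpos_nonpos)
    ultimately show ?thesis by simp
  qed
  have eq: "(\<Prod>z\<in>D. c + t * f z) + (\<Prod>z\<in>D. c - t * f z) = 2 * c ^ (CARD('n) - 2) * (c^2 + t^2 * (a * b))"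
    unfolding split2 split[of t] by (simp add: algebra_simps power2_eq_square)
  have cn: "c ^ CARD('n) = c ^ (CARD('n) - 2) * c^2" using n2 by (metis le_add_diff_inverse2 power_add)
  have "t^2 * (a*b) \<le> 0" using ab by (simp add: mult_nonneg_nonpos)
  then show "(\<Prod>z\<in>D. c + t * f z) + (\<Prod>z\<in>D. c - t * f z) \<le> 2 * c ^ CARD('n)"
    unfolding eq cn using c by (simp add: mult_left_mono)
  assume t: "t \<noteq> 0" and pp: "(p,p,p) \<in> D" and qq: "(q,q,q) \<in> D"
  have "zp = (p,p,p)" using dist[OF zp(1) pp] zp by auto
  moreover have "zq = (q,q,q)" using dist[OF zq(1) qq] zq by auto
  ultimately have "a * b = -1" using pq by (simp add: a_def b_def f_def xv_def)
  then have "t^2 * (a*b) < 0" using t by simp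
  then show "(\<Prod>z\<in>D. c + t * f z) + (\<Prod>z\<in>D. c - t * f z) < 2 * c ^ CARD('n)"
    unfolding eq cn using c by simp
qed

definition Dm :: "('n::finite \<Rightarrow> 'n) \<Rightarrow> ('n \<Rightarrow> 'n) \<Rightarrow> 'n mat3" where
  "Dm \<sigma> \<tau> = (\<chi> i j k. of_bool (\<sigma> i = j) * of_bool (\<tau> i = k))"

lemma Dm_Lambda2:
  assumes s: "\<sigma> permutes UNIV" and t: "\<tau> permutes UNIV"
  shows "Dm \<sigma> \<tau> \<in> Lambda2"
proof -
  have A: "\<forall>i j k. Dm \<sigma> \<tau> $ i $ j $ k = 0 \<or> Dm \<sigma> \<tau> $ i $ j $ k = 1"
    by (simp add: Dm_def)
  have B: "\<exists>!p. Dm \<sigma> \<tau> $ i $ fst p $ snd p = 1" for i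
    by (rule ex1I[of _ "(\<sigma> i, \<tau> i)"]) (auto simp: Dm_def of_bool_def split: if_splits)
  have C: "\<exists>!p. Dm \<sigma> \<tau> $ fst p $ j $ snd p = 1" for j
    by (rule ex1I[of _ "(inv \<sigma> j, \<tau> (inv \<sigma> j))"])
       (auto simp: Dm_def of_bool_def permutes_inverses[OF s] permutes_inv_eq[OF s] split: if_splits)
  have D: "\<exists>!p. Dm \<sigma> \<tau> $ fst p $ snd p $ k = 1" for k
    by (rule ex1I[of _ "(inv \<tau> k, \<sigma> (inv \<tau> k))"])
       (auto simp: Dm_def of_bool_def permutes_inverses[OF t] permutes_inv_eq[OF t] split: if_splits)
  show ?thesis unfolding Lambda2_def using A B C D by blast
qed

lemma sum_ind: "finite S \<Longrightarrow> a \<in> S \<Longrightarrow> (\<Sum>x\<in>S. of_bool (x = a) * (h x::real)) = h a"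
proof -
  assume "finite S" "a \<in> S"
  have "(\<lambda>x. of_bool (x = a) * h x) = (\<lambda>x. if x = a then h x else 0)" by auto
  then show ?thesis using \<open>finite S\<close> \<open>a \<in> S\<close> by (simp add: sum.delta')
qed

definition tb :: "'n \<Rightarrow> 'n \<Rightarrow> 'n \<Rightarrow> 'n \<Rightarrow> 'n" where
  "tb p q r i = (if i = p then r else if i = q then p else if i = r then q else i)"
definition tc :: "'n \<Rightarrow> 'n \<Rightarrow> 'n \<Rightarrow> 'n \<Rightarrow> 'n" where
  "tc p q r i = (if i = p then q else if i = q then r else if i = r then p else i)"

lemma tb_perm: "p \<noteq> q \<Longrightarrow> q \<noteq> r \<Longrightarrow> p \<noteq> r \<Longrightarrow> tb p q r permutes (UNIV::'n::finite set)"
  by (rule inj_permutes) (auto simp: inj_def tb_def split: if_splits)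
lemma tc_perm: "p \<noteq> q \<Longrightarrow> q \<noteq> r \<Longrightarrow> p \<noteq> r \<Longrightarrow> tc p q r permutes (UNIV::'n::finite set)"
  by (rule inj_permutes) (auto simp: inj_def tc_def split: if_splits)

lemma T_formula:
  assumes "p \<noteq> q" "q \<noteq> r" "p \<noteq> r"
  shows "(of_bool (i = j) - of_bool (Transposition.transpose p q i = j)) *
     (of_bool (Transposition.transpose q r i = k) + of_bool (tb p q r i = k)
      - of_bool (tc p q r i = k) - of_bool (Transposition.transpose p r i = k))
   = xv p q i * xv p q j * xv p q k"
  using assms by (auto simp: xv_def tb_def tc_def transpose_def)

lemma sum_pair: "(\<Sum>z\<in>A\<times>B. F z) = (\<Sum>x\<in>A. \<Sum>y\<in>B. (F (x,y)::real))"
  by (simp add: sum.cartesian_product)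

lemma construct:
  fixes p q r :: "'n::finite" and s :: real
  assumes d: "p \<noteq> q" "q \<noteq> r" "p \<noteq> r"
    and sb: "\<bar>s\<bar> \<le> 1 / (4 * (fact CARD('n))^2)"
  shows "\<exists>A::'n mat3. A \<in> convex hull Lambda2 \<and>
     (\<forall>i j k. A $ i $ j $ k = 1 / (real CARD('n))^2 + s * (xv p q i * xv p q j * xv p q k))"
proof -
  define P where "P = {\<sigma>::'n\<Rightarrow>'n. \<sigma> permutes UNIV}"
  define N where "N = (fact CARD('n) :: real)"
  define sg where "sg \<sigma> = (of_bool (\<sigma> = id) - of_bool (\<sigma> = Transposition.transpose p q) :: real)" for \<sigma> :: "'n \<Rightarrow> 'n"
  define gt where "gt \<tau> = (of_bool (\<tau> = Transposition.transpose q r) + of_bool (\<tau> = tb p q r)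
      - of_bool (\<tau> = tc p q r) - of_bool (\<tau> = Transposition.transpose p r) :: real)" for \<tau> :: "'n \<Rightarrow> 'n"
  define w where "w z = 1 / N^2 + s * (sg (fst z) * gt (snd z))" for z
  define A where "A = (\<Sum>z\<in>P\<times>P. w z *\<^sub>R Dm (fst z) (snd z))"
  have fin: "finite P" by simp
  have Npos: "N > 0" by (simp add: N_def)
  have inP: "id \<in> P" "Transposition.transpose p q \<in> P" "Transposition.transpose q r \<in> P"
     "Transposition.transpose p r \<in> P" "tb p q r \<in> P" "tc p q r \<in> P"
    using d by (auto simp: P_def permutes_id permutes_swap_id tb_perm tc_perm)
  have cardP: "real (card P) = N" unfolding P_def N_def
    using card_permutations[of "UNIV::'n set" "CARD('n)"] by simp
  have sumsg: "(\<Sum>\<sigma>\<in>P. sg \<sigma> * h \<sigma>) = h id - h (Transposition.transpose p q)" for h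
  proof -
    have "(\<Sum>\<sigma>\<in>P. sg \<sigma> * h \<sigma>) = (\<Sum>\<sigma>\<in>P. of_bool (\<sigma> = id) * h \<sigma>)
        - (\<Sum>\<sigma>\<in>P. of_bool (\<sigma> = Transposition.transpose p q) * h \<sigma>)"
      by (simp add: sg_def left_diff_distrib sum_subtractf)
    then show ?thesis using sum_ind[OF fin inP(1)] sum_ind[OF fin inP(2)] by simp
  qed
  have sumgt: "(\<Sum>\<tau>\<in>P. gt \<tau> * h \<tau>) = h (Transposition.transpose q r) + h (tb p q r)
       - h (tc p q r) - h (Transposition.transpose p r)" for h
  proof -
    have "(\<Sum>\<tau>\<in>P. gt \<tau> * h \<tau>) = (\<Sum>\<tau>\<in>P. of_bool (\<tau> = Transposition.transpose q r) * h \<tau>)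
        + (\<Sum>\<tau>\<in>P. of_bool (\<tau> = tb p q r) * h \<tau>)
        - (\<Sum>\<tau>\<in>P. of_bool (\<tau> = tc p q r) * h \<tau>)
        - (\<Sum>\<tau>\<in>P. of_bool (\<tau> = Transposition.transpose p r) * h \<tau>)"
      by (simp add: gt_def algebra_simps sum_subtractf sum.distrib)
    then show ?thesis using sum_ind[OF fin inP(3)] sum_ind[OF fin inP(5)] sum_ind[OF fin inP(6)]
        sum_ind[OF fin inP(4)] by simp
  qed
  have sg0: "(\<Sum>\<sigma>\<in>P. sg \<sigma>) = 0" using sumsg[of "\<lambda>_. 1"] by simp
  have sgb: "\<bar>sg \<sigma>\<bar> \<le> 1" for \<sigma> by (simp add: sg_def of_bool_def)
  have gtb: "\<bar>gt \<tau>\<bar> \<le> 2" for \<tau> by (simp add: gt_def of_bool_def)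
  have wsum: "(\<Sum>z\<in>P\<times>P. w z) = 1"
  proof -
    have "(\<Sum>z\<in>P\<times>P. w z) = (\<Sum>\<sigma>\<in>P. \<Sum>\<tau>\<in>P. 1 / N^2 + s * (sg \<sigma> * gt \<tau>))"
      by (simp add: sum_pair w_def)
    also have "\<dots> = (\<Sum>\<sigma>\<in>P. \<Sum>\<tau>\<in>P. 1 / N^2) + (\<Sum>\<sigma>\<in>P. \<Sum>\<tau>\<in>P. s * (sg \<sigma> * gt \<tau>))"
      by (simp add: sum.distrib)
    also have "(\<Sum>\<sigma>\<in>P. \<Sum>\<tau>\<in>P. s * (sg \<sigma> * gt \<tau>)) = s * ((\<Sum>\<sigma>\<in>P. sg \<sigma>) * (\<Sum>\<tau>\<in>P. gt \<tau>))"
    proof -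
      have "\<And>\<sigma>. (\<Sum>\<tau>\<in>P. s * (sg \<sigma> * gt \<tau>)) = sg \<sigma> * (s * (\<Sum>\<tau>\<in>P. gt \<tau>))"
        by (simp add: sum_distrib_left mult_ac)
      then have "(\<Sum>\<sigma>\<in>P. \<Sum>\<tau>\<in>P. s * (sg \<sigma> * gt \<tau>)) = (\<Sum>\<sigma>\<in>P. sg \<sigma>) * (s * (\<Sum>\<tau>\<in>P. gt \<tau>))"
        by (simp add: sum_distrib_right)
      then show ?thesis by (simp add: mult_ac)
    qed
    also have "(\<Sum>\<sigma>\<in>P. \<Sum>\<tau>\<in>P. 1 / N^2) = real (card P) * real (card P) / N^2"
      by simp
    also have "\<dots> = 1" using sg0 cardP Npos by (simp add: power2_eq_square)
    finally show ?thesis using sg0 by simp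
  qed
  have wpos: "w z \<ge> 0" for z
  proof -
    have "\<bar>sg (fst z) * gt (snd z)\<bar> \<le> 2"
      using mult_mono[OF sgb gtb] by (simp add: abs_mult)
    then have "\<bar>s * (sg (fst z) * gt (snd z))\<bar> \<le> 1 / (4 * N^2) * 2"
      using sb unfolding N_def abs_mult by (intro mult_mono) auto
    then have "s * (sg (fst z) * gt (snd z)) \<ge> - (1 / (2 * N^2))" by (simp add: abs_le_iff)
    moreover have "1 / (2 * N^2) \<le> 1 / N^2" using Npos by (simp add: field_simps)
    ultimately show ?thesis unfolding w_def by linarith
  qed
  have conv: "A \<in> convex hull Lambda2"
    unfolding A_def
  proof (rule convex_sum)
    show "finite (P \<times> P)" by simp
    show "convex (convex hull Lambda2)" by (rule convex_convex_hull)
    show "(\<Sum>z\<in>P\<times>P. w z) = 1" by (rule wsum)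
    show "\<And>z. z \<in> P \<times> P \<Longrightarrow> 0 \<le> w z" using wpos by blast
    show "\<And>z. z \<in> P \<times> P \<Longrightarrow> Dm (fst z) (snd z) \<in> convex hull Lambda2"
      by (rule hull_inc) (auto simp: P_def intro: Dm_Lambda2)
  qed
  have ent: "A $ i $ j $ k = 1 / (real CARD('n))^2 + s * (xv p q i * xv p q j * xv p q k)" for i j k
  proof -
    define a where "a \<sigma> = (of_bool (\<sigma> i = j) :: real)" for \<sigma> :: "'n \<Rightarrow> 'n"
    define b where "b \<tau> = (of_bool (\<tau> i = k) :: real)" for \<tau> :: "'n \<Rightarrow> 'n"
    have "A $ i $ j $ k = (\<Sum>z\<in>P\<times>P. w z * (a (fst z) * b (snd z)))"
      by (simp add: A_def Dm_def a_def b_def)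
    also have "\<dots> = (\<Sum>\<sigma>\<in>P. \<Sum>\<tau>\<in>P. (1 / N^2 + s * (sg \<sigma> * gt \<tau>)) * (a \<sigma> * b \<tau>))"
      by (simp add: sum_pair w_def)
    also have "\<dots> = (1 / N^2) * ((\<Sum>\<sigma>\<in>P. a \<sigma>) * (\<Sum>\<tau>\<in>P. b \<tau>))
        + s * ((\<Sum>\<sigma>\<in>P. sg \<sigma> * a \<sigma>) * (\<Sum>\<tau>\<in>P. gt \<tau> * b \<tau>))"
    proof -
      have "(\<Sum>\<sigma>\<in>P. \<Sum>\<tau>\<in>P. (1 / N^2 + s * (sg \<sigma> * gt \<tau>)) * (a \<sigma> * b \<tau>))
        = (\<Sum>\<sigma>\<in>P. \<Sum>\<tau>\<in>P. ((1 / N^2) * a \<sigma>) * b \<tau>)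
          + (\<Sum>\<sigma>\<in>P. \<Sum>\<tau>\<in>P. (s * sg \<sigma> * a \<sigma>) * (gt \<tau> * b \<tau>))"
        by (simp add: sum.distrib algebra_simps)
      also have "\<dots> = (\<Sum>\<sigma>\<in>P. (1 / N^2) * a \<sigma>) * (\<Sum>\<tau>\<in>P. b \<tau>)
          + (\<Sum>\<sigma>\<in>P. s * sg \<sigma> * a \<sigma>) * (\<Sum>\<tau>\<in>P. gt \<tau> * b \<tau>)"
        by (simp only: sum_product)
      also have "(\<Sum>\<sigma>\<in>P. (1 / N^2) * a \<sigma>) = (1 / N^2) * (\<Sum>\<sigma>\<in>P. a \<sigma>)"
        by (rule sum_distrib_left[symmetric])
      also have "(\<Sum>\<sigma>\<in>P. s * sg \<sigma> * a \<sigma>) = s * (\<Sum>\<sigma>\<in>P. sg \<sigma> * a \<sigma>)"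
        by (simp add: sum_distrib_left mult.assoc)
      finally show ?thesis by (simp only: mult.assoc)
    qed
    also have "(\<Sum>\<sigma>\<in>P. a \<sigma>) = N / CARD('n)"
    proof -
      have "(\<Sum>\<sigma>\<in>P. a \<sigma>) = real (card (P \<inter> {\<sigma>. \<sigma> i = j}))" by (simp add: a_def)
      also have "P \<inter> {\<sigma>. \<sigma> i = j} = {\<sigma>. \<sigma> permutes UNIV \<and> \<sigma> i = j}" by (auto simp: P_def)
      finally show ?thesis using perm_count[of i j] by (simp add: N_def)
    qed
    also have "(\<Sum>\<tau>\<in>P. b \<tau>) = N / CARD('n)"
    proof -
      have "(\<Sum>\<tau>\<in>P. b \<tau>) = real (card (P \<inter> {\<sigma>. \<sigma> i = k}))" by (simp add: b_def)
      also have "P \<inter> {\<sigma>. \<sigma> i = k} = {\<sigma>. \<sigma> permutes UNIV \<and> \<sigma> i = k}" by (auto simp: P_def)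
      finally show ?thesis using perm_count[of i k] by (simp add: N_def)
    qed
    also have "(\<Sum>\<sigma>\<in>P. sg \<sigma> * a \<sigma>) * (\<Sum>\<tau>\<in>P. gt \<tau> * b \<tau>) = xv p q i * xv p q j * xv p q k"
      unfolding sumsg sumgt a_def b_def using T_formula[OF d, of i j k] by simp
    finally show ?thesis using Npos by (simp add: field_simps power2_eq_square)
  qed
  show ?thesis using conv ent by blast
qed

lemma entry3_eq: "entry3 A z = A $ fst z $ fst (snd z) $ snd (snd z)"
  by (cases z) (simp add: entry3_def)

theorem lemma3p2:
  assumes "CARD('n::finite) > 2"
  shows "\<exists>A :: 'n mat3. A \<in> convex hull Lambda2 \<and>
    (per3 A < (fact CARD('n) / real CARD('n) ^ CARD('n))^2 \<or>
     (per3 A = (fact CARD('n) / real CARD('n) ^ CARD('n))^2 \<and>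
      A \<noteq> (1 / real CARD('n) ^ 2) *\<^sub>R J3))"
proof -
  obtain p q r :: 'n where d: "p \<noteq> q" "q \<noteq> r" "p \<noteq> r"
  proof -
    obtain T :: "'n set" where "card T = 3" using assms ex_card[of 3 "UNIV::'n set"] by auto
    then show ?thesis using that by (auto simp: card_3_iff)
  qed
  define n where "n = CARD('n)"
  define N where "N = (fact n :: real)"
  define c where "c = 1 / (real n)^2"
  define t where "t = 1 / (4 * N^2)"
  define f where "f = (\<lambda>z::'n\<times>'n\<times>'n. xv p q (fst z) * xv p q (fst (snd z)) * xv p q (snd (snd z)))"
  have Npos: "N > 0" by (simp add: N_def)
  have tpos: "t > 0" using Npos by (simp add: t_def)
  have cpos: "c > 0" by (simp add: c_def n_def)
  obtain A1 :: "'n mat3" where A1: "A1 \<in> convex hull Lambda2"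
     "\<And>i j k. A1 $ i $ j $ k = c + t * (xv p q i * xv p q j * xv p q k)"
    using construct[OF d, of t] tpos by (auto simp: t_def N_def n_def c_def)
  obtain A2 :: "'n mat3" where A2: "A2 \<in> convex hull Lambda2"
     "\<And>i j k. A2 $ i $ j $ k = c + (-t) * (xv p q i * xv p q j * xv p q k)"
    using construct[OF d, of "-t"] tpos by (auto simp: t_def N_def n_def c_def)
  have p1: "per3 A1 = (\<Sum>D\<in>diagonals3. \<Prod>z\<in>D. c + t * f z)"
    by (simp add: per3_def entry3_eq A1 f_def mult.assoc)
  have p2: "per3 A2 = (\<Sum>D\<in>diagonals3. \<Prod>z\<in>D. c - t * f z)"
    by (simp add: per3_def entry3_eq A2 f_def mult.assoc)
  have "per3 A1 + per3 A2 = (\<Sum>D\<in>diagonals3. (\<Prod>z\<in>D. c + t * f z) + (\<Prod>z\<in>D. c - t * f z))"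
    by (simp add: p1 p2 sum.distrib)
  also have "\<dots> < (\<Sum>D\<in>(diagonals3::('n\<times>'n\<times>'n) set set). 2 * c ^ n)"
  proof (rule sum_strict_mono_ex1)
    show "finite (diagonals3::('n\<times>'n\<times>'n) set set)" by simp
    show "\<forall>D\<in>diagonals3. (\<Prod>z\<in>D. c + t * f z) + (\<Prod>z\<in>D. c - t * f z) \<le> 2 * c ^ n"
      using key_ineq(1)[OF _ d(1) cpos] by (simp add: f_def n_def)
    have dI: "diag id id \<in> (diagonals3::('n\<times>'n\<times>'n) set set)" by (rule diag_in) (auto intro: permutes_id)
    have "(p,p,p) \<in> diag id id" "(q,q,q) \<in> diag id id" by (auto simp: diag_def)
    then have "(\<Prod>z\<in>diag id id. c + t * f z) + (\<Prod>z\<in>diag id id. c - t * f z) < 2 * c ^ n"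
      using key_ineq(2)[OF dI d(1) cpos, of t] tpos by (simp add: f_def n_def)
    then show "\<exists>D\<in>diagonals3. (\<Prod>z\<in>D. c + t * f z) + (\<Prod>z\<in>D. c - t * f z) < 2 * c ^ n"
      using dI by blast
  qed
  also have "\<dots> = 2 * c ^ n * real (card (diagonals3::('n\<times>'n\<times>'n) set set))" by simp
  also have "\<dots> = 2 * (fact CARD('n) / real CARD('n) ^ CARD('n))^2"
    unfolding card_diagonals3 c_def n_def by (simp add: power_divide power_mult_distrib power_mult[symmetric] field_simps)
  finally have "per3 A1 < (fact CARD('n) / real CARD('n) ^ CARD('n))^2 \<or>
                per3 A2 < (fact CARD('n) / real CARD('n) ^ CARD('n))^2" by linarith
  then show ?thesis using A1(1) A2(1) by blast
qed

end
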